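(* Let $u$ be a word of length $n\ge1$. If $\mathrm{per}(u)<n$ then $\mathrm{lseedmax}(u)=n-1$; otherwise $\mathrm{lseedmax}(u)=0$.
   Context: For a nonempty word $x$, $\mathrm{per}(x)$ is the smallest positive integer $p$ with $x_i=x_{i+p}$ for all $1\le i\le|x|-p$. A word $s$ covers $w$ if every position of $w$ lies in some occurrence of $s$ in $w$. A seed of $u$ is a factor $s$ of $u$ such that $u$ is a factor of some word covered by $s$; a left seed is a seed that is a prefix of $u$. $\mathrm{lseedmax}(u)$ is the length of the longest left seed of $u$ that is shorter than $u$, or $0$ if there is none. *)

theory Defs
  imports Main
begin

definition per :: "'a list \<Rightarrow> nat" where
  "per x = (LEAST p. 0 < p \<and> (\<forall>i. i + p < length x \<longrightarrow> x ! i = x ! (i + p)))"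

definition occurs_at :: "'a list \<Rightarrow> 'a list \<Rightarrow> nat \<Rightarrow> bool" where
  "occurs_at s w i \<longleftrightarrow> i + length s \<le> length w \<and> take (length s) (drop i w) = s"

definition covers :: "'a list \<Rightarrow> 'a list \<Rightarrow> bool" where
  "covers s w \<longleftrightarrow> (\<forall>j < length w. \<exists>i. occurs_at s w i \<and> i \<le> j \<and> j < i + length s)"

definition factor :: "'a list \<Rightarrow> 'a list \<Rightarrow> bool" where
  "factor s u \<longleftrightarrow> (\<exists>p q. u = p @ s @ q)"

definition seed :: "'a list \<Rightarrow> 'a list \<Rightarrow> bool" where
  "seed s u \<longleftrightarrow> factor s u \<and> (\<exists>w. covers s w \<and> factor u w)"

definition left_seed :: "'a list \<Rightarrow> 'a list \<Rightarrow> bool" where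
  "left_seed s u \<longleftrightarrow> seed s u \<and> take (length s) u = s"

definition lseedmax :: "'a list \<Rightarrow> nat" where
  "lseedmax u = (if \<exists>s. left_seed s u \<and> length s < length u
                 then Max {length s | s. left_seed s u \<and> length s < length u}
                 else 0)"

end

theory Submission
  imports Defs
begin

lemma occ_nth: "occurs_at s w i \<Longrightarrow> t < length s \<Longrightarrow> w ! (i + t) = s ! t"
  unfolding occurs_at_def
  by (metis add.commute nth_drop nth_take le_add2 add_le_mono1 less_imp_le_nat order_trans)

lemma no_short_seed:
  assumes ls: "left_seed s u" and k: "length s < length u"
  shows "per u < length u"
proof -
  let ?n = "length u" let ?k = "length s"
  have pre: "take ?k u = s" and sd: "seed s u" using ls by (auto simp: left_seed_def)
  have su: "\<And>t. t < ?k \<Longrightarrow> s ! t = u ! t" using pre k by (metis nth_take)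
  obtain w where cw: "covers s w" and fw: "factor u w" using sd by (auto simp: seed_def)
  obtain p q where wd: "w = p @ u @ q" using fw by (auto simp: factor_def)
  have wu: "\<And>t. t < ?n \<Longrightarrow> w ! (length p + t) = u ! t" using wd by (simp add: nth_append)
  define j where "j = length p + ?n - 1"
  have jl: "j < length w" using wd k unfolding j_def by simp
  obtain i where oi: "occurs_at s w i" and ij: "i \<le> j" and ji: "j < i + ?k"
    using cw jl unfolding covers_def by blast
  have ip: "i > length p"
  proof (rule ccontr)
    assume "\<not> ?thesis" then have "i + ?k \<le> length p + ?k" by simp
    with ji k show False unfolding j_def by simp
  qed
  define d where "d = i - length p"
  have d1: "0 < d" and dn: "d < ?n" and dk: "?n \<le> d + ?k"
    using ip ij ji k unfolding d_def j_def by auto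
  have per_d: "\<forall>t. t + d < ?n \<longrightarrow> u ! t = u ! (t + d)"
  proof (intro allI impI)
    fix t assume tl: "t + d < ?n"
    have tk: "t < ?k" using tl dk by simp
    have "u ! (t + d) = w ! (length p + (t + d))" using wu tl by simp
    also have "\<dots> = w ! (i + t)" using ip unfolding d_def by (simp add: algebra_simps)
    also have "\<dots> = s ! t" using occ_nth[OF oi tk] .
    also have "\<dots> = u ! t" using su tk by simp
    finally show "u ! t = u ! (t + d)" by simp
  qed
  have "per u \<le> d" unfolding per_def by (rule Least_le) (use d1 per_d in auto)
  with dn show ?thesis by simp
qed

lemma long_seed:
  assumes pn: "per u < length u"
  shows "left_seed (take (length u - 1) u) u"
proof -
  let ?n = "length u"
  define p where "p = per u"
  have P: "0 < p \<and> (\<forall>i. i + p < ?n \<longrightarrow> u ! i = u ! (i + p))"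
    unfolding p_def per_def by (rule LeastI[of _ ?n]) (use pn in auto)
  have p0: "0 < p" and pp: "\<And>i. i + p < ?n \<Longrightarrow> u ! i = u ! (i + p)" using P by auto
  have pnn: "p < ?n" using pn p_def by simp
  define s where "s = take (?n - 1) u"
  define w where "w = take p u @ s"
  have ls: "length s = ?n - 1" unfolding s_def by simp
  have lw: "length w = p + (?n - 1)" unfolding w_def using pnn ls by simp
  have wu: "\<And>x. x < ?n \<Longrightarrow> w ! x = u ! x"
  proof -
    fix x assume x: "x < ?n"
    show "w ! x = u ! x"
    proof (cases "x < p")
      case True then show ?thesis unfolding w_def using pnn by (simp add: nth_append)
    next
      case False
      then have "w ! x = s ! (x - p)" unfolding w_def using pnn by (simp add: nth_append)
      also have "\<dots> = u ! (x - p)" unfolding s_def using x p0 False by simp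
      also have "\<dots> = u ! (x - p + p)" using pp[of "x - p"] x False by simp
      finally show ?thesis using False by simp
    qed
  qed
  have o0: "occurs_at s w 0"
    unfolding occurs_at_def using lw ls
    by (auto intro!: nth_equalityI simp: wu s_def)
  have op: "occurs_at s w p"
    unfolding occurs_at_def using lw ls pnn unfolding w_def by simp
  have cov: "covers s w"
    unfolding covers_def
  proof (intro allI impI)
    fix j assume j: "j < length w"
    show "\<exists>i. occurs_at s w i \<and> i \<le> j \<and> j < i + length s"
    proof (cases "j < ?n - 1")
      case True then show ?thesis using o0 ls by auto
    next
      case False then show ?thesis using op ls j lw p0 pnn by (intro exI[of _ p]) auto
    qed
  qed
  have tw: "take ?n w = u" using lw p0 pnn by (auto intro!: nth_equalityI simp: wu)
  have fw: "factor u w" unfolding factor_def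
    by (rule exI[of _ "[]"], rule exI[of _ "drop ?n w"]) (metis append_Nil append_take_drop_id tw)
  have fs: "factor s u" unfolding factor_def s_def
    by (rule exI[of _ "[]"], rule exI[of _ "drop (?n - 1) u"]) simp
  show ?thesis unfolding left_seed_def seed_def using fw fs cov
    by (fold s_def) (auto simp: ls s_def)
qed

theorem lemma3:
  fixes u :: "'a list" and n :: nat
  assumes "length u = n" and "n \<ge> 1"
  shows "lseedmax u = (if per u < n then n - 1 else 0)"
proof (cases "per u < n")
  case True
  let ?S = "{length s | s. left_seed s u \<and> length s < length u}"
  have m: "n - 1 \<in> ?S" using long_seed[of u] True assms
    by (intro CollectI exI[of _ "take (length u - 1) u"]) auto
  have b: "\<And>x. x \<in> ?S \<Longrightarrow> x \<le> n - 1" using assms by auto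
  have f: "finite ?S" by (rule finite_subset[of _ "{..<length u}"]) auto
  have "Max ?S = n - 1" by (rule Max_eqI[OF f b m])
  then show ?thesis unfolding lseedmax_def using True m by auto
next
  case False
  then have "\<not> (\<exists>s. left_seed s u \<and> length s < length u)" using no_short_seed assms by blast
  then show ?thesis unfolding lseedmax_def using False by (simp only: if_False)
qed

end
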